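(* Fix classes $i\neq j$ with $d_{ij}>0$, an integer $m\ge1$, and assume $M_{4,i},M_{4,j}<\infty$. Let $\Delta:=\|z_i-\widehat\mu_j\|_2^2-\|z_i-\widehat\mu_i\|_2^2$ and suppose $\mathbb E[\Delta]=d_{ij}^2+\frac{v_j-v_i}{m}>0$. For any $\lambda_T,\lambda_S,\lambda_Q>0$, set $\kappa:=\lambda_T+\lambda_S+\lambda_Q$, $a_T:=\frac{4\kappa}{m\lambda_T}$, $a_S:=\frac{\kappa}{m\lambda_S}$, $a_Q:=\frac{\kappa}{m^3\lambda_Q}$. Then \[ \Pr(\Delta\le 0)\le \frac{4\tilde V_{ij}+a_TV_{ij}^2+\bigl(\frac{a_T}{4}+a_S\bigr)V_{ij}+a_Q\bigl(\Theta_{ij}+2(m-1)V_{ij}^2\bigr)}{\bigl(1+\frac{v_j-v_i}{m d_{ij}^2}\bigr)^2}. \]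
   Context: For $c\in\{i,j\}$, $z_c=f(x)$ with $x\sim D_c$ has mean $\mu_c$, covariance $\Sigma_c$, $v_c:=\mathrm{tr}(\Sigma_c)$, $M_{4,c}:=\mathbb E\|z_c-\mu_c\|_2^4$. Support inputs $x_{c,1},\dots,x_{c,m}$ are i.i.d. from $D_c$ for $c\in\{i,j\}$, independent across classes; $\widehat\mu_c:=\frac1m\sum_{s}f(x_{c,s})$. The test point $z_i=f(x_i)$, $x_i\sim D_i$, is independent of the support inputs. $d_{ij}:=\|\mu_j-\mu_i\|_2$, $u_{ij}:=(\mu_j-\mu_i)/d_{ij}$, $\tilde V_{ij}:=\frac{u_{ij}^\top\Sigma_iu_{ij}}{d_{ij}^2}$, $V_{ij}:=\frac{v_i+v_j}{d_{ij}^2}$, $\Theta_{ij}:=\frac{M_{4,i}+M_{4,j}}{d_{ij}^4}$. The probability is over the support sets and the test point. *)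

theory Defs
  imports "HOL-Probability.Probability"
begin

definition feat_mean :: "'x measure \<Rightarrow> ('x \<Rightarrow> 'a::euclidean_space) \<Rightarrow> 'a" where
  "feat_mean D f = (\<integral>x. f x \<partial>D)"

definition feat_cov :: "'x measure \<Rightarrow> ('x \<Rightarrow> 'a::euclidean_space) \<Rightarrow> 'a \<Rightarrow> 'a \<Rightarrow> real" where
  "feat_cov D f u w = (\<integral>x. ((f x - feat_mean D f) \<bullet> u) * ((f x - feat_mean D f) \<bullet> w) \<partial>D)"

definition feat_trcov :: "'x measure \<Rightarrow> ('x \<Rightarrow> 'a::euclidean_space) \<Rightarrow> real" where
  "feat_trcov D f = (\<Sum>b\<in>Basis. feat_cov D f b b)"

definition feat_M4 :: "'x measure \<Rightarrow> ('x \<Rightarrow> 'a::euclidean_space) \<Rightarrow> real" where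
  "feat_M4 D f = (\<integral>x. norm (f x - feat_mean D f) ^ 4 \<partial>D)"

definition emp_mean :: "nat \<Rightarrow> ('x \<Rightarrow> 'a::euclidean_space) \<Rightarrow> (nat \<Rightarrow> 'x) \<Rightarrow> 'a" where
  "emp_mean m f xs = (1 / real m) *\<^sub>R (\<Sum>s<m. f (xs s))"

definition episode_space :: "nat \<Rightarrow> 'x measure \<Rightarrow> 'x measure \<Rightarrow>
    (((nat \<Rightarrow> 'x) \<times> (nat \<Rightarrow> 'x)) \<times> 'x) measure" where
  "episode_space m Di Dj =
     (PiM {..<m} (\<lambda>_. Di) \<Otimes>\<^sub>M PiM {..<m} (\<lambda>_. Dj)) \<Otimes>\<^sub>M Di"

definition margin :: "nat \<Rightarrow> ('x \<Rightarrow> 'a::euclidean_space) \<Rightarrow>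
    ((nat \<Rightarrow> 'x) \<times> (nat \<Rightarrow> 'x)) \<times> 'x \<Rightarrow> real" where
  "margin m f \<omega> = (case \<omega> of ((xsi, xsj), x) \<Rightarrow>
     norm (f x - emp_mean m f xsj) ^ 2 - norm (f x - emp_mean m f xsi) ^ 2)"

end

theory Submission
  imports Defs
begin


lemma pair_mult:
  fixes f :: "'a \<Rightarrow> real" and g :: "'b \<Rightarrow> real"
  assumes M: "prob_space M" and N: "prob_space N" and f: "integrable M f" and g: "integrable N g"
  shows "integrable (M \<Otimes>\<^sub>M N) (\<lambda>\<omega>. f (fst \<omega>) * g (snd \<omega>))"
    and "(\<integral>\<omega>. f (fst \<omega>) * g (snd \<omega>) \<partial>(M \<Otimes>\<^sub>M N)) = integral\<^sup>L M f * integral\<^sup>L N g"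
proof -
  interpret M: prob_space M by fact
  interpret N: prob_space N by fact
  interpret P: pair_sigma_finite M N
    by (simp add: M.sigma_finite_measure_axioms N.sigma_finite_measure_axioms pair_sigma_finite.intro)
  have [measurable]: "f \<in> borel_measurable M" "g \<in> borel_measurable N" using f g by auto
  have "(\<integral>\<^sup>+ \<omega>. ennreal (norm (f (fst \<omega>) * g (snd \<omega>))) \<partial>(M \<Otimes>\<^sub>M N))
      = (\<integral>\<^sup>+ x. \<integral>\<^sup>+ y. ennreal (norm (f x)) * ennreal (norm (g y)) \<partial>N \<partial>M)"
    by (subst N.nn_integral_fst[symmetric]) (auto simp: abs_mult ennreal_mult)
  also have "\<dots> = (\<integral>\<^sup>+ x. ennreal (norm (f x)) \<partial>M) * (\<integral>\<^sup>+ y. ennreal (norm (g y)) \<partial>N)"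
    by (simp add: nn_integral_cmult nn_integral_multc)
  also have "\<dots> < \<infinity>" using f g by (simp add: integrable_iff_bounded ennreal_mult_less_top)
  finally show I: "integrable (M \<Otimes>\<^sub>M N) (\<lambda>\<omega>. f (fst \<omega>) * g (snd \<omega>))"
    by (simp add: integrable_iff_bounded)
  have "(\<integral>\<omega>. f (fst \<omega>) * g (snd \<omega>) \<partial>(M \<Otimes>\<^sub>M N)) = (\<integral>x. \<integral>y. f x * g y \<partial>N \<partial>M)"
    using P.integral_fst'[OF I] by simp
  also have "\<dots> = integral\<^sup>L M f * integral\<^sup>L N g" by simp
  finally show "(\<integral>\<omega>. f (fst \<omega>) * g (snd \<omega>) \<partial>(M \<Otimes>\<^sub>M N)) = integral\<^sup>L M f * integral\<^sup>L N g" .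
qed



lemma pair_fst:
  fixes F :: "'a \<Rightarrow> 'c::{banach, second_countable_topology}"
  assumes M: "prob_space M" and N: "prob_space N" and f: "integrable M F"
  shows "integrable (M \<Otimes>\<^sub>M N) (\<lambda>\<omega>. F (fst \<omega>))"
    and "(\<integral>\<omega>. F (fst \<omega>) \<partial>(M \<Otimes>\<^sub>M N)) = integral\<^sup>L M F"
proof -
  interpret M: prob_space M by fact
  interpret N: prob_space N by fact
  interpret P: pair_sigma_finite M N
    by (simp add: M.sigma_finite_measure_axioms N.sigma_finite_measure_axioms pair_sigma_finite.intro)
  have [measurable]: "F \<in> borel_measurable M" using f by auto
  have "(\<integral>\<^sup>+ \<omega>. ennreal (norm (F (fst \<omega>))) \<partial>(M \<Otimes>\<^sub>M N))
      = (\<integral>\<^sup>+ x. \<integral>\<^sup>+ y. ennreal (norm (F x)) \<partial>N \<partial>M)"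
    by (subst N.nn_integral_fst[symmetric]) auto
  also have "\<dots> = (\<integral>\<^sup>+ x. ennreal (norm (F x)) \<partial>M)"
    by (simp add: N.emeasure_space_1)
  also have "\<dots> < \<infinity>" using f by (simp add: integrable_iff_bounded)
  finally show I: "integrable (M \<Otimes>\<^sub>M N) (\<lambda>\<omega>. F (fst \<omega>))"
    by (simp add: integrable_iff_bounded)
  have "(\<integral>\<omega>. F (fst \<omega>) \<partial>(M \<Otimes>\<^sub>M N)) = (\<integral>x. \<integral>y. F x \<partial>N \<partial>M)"
    using P.integral_fst'[OF I] by simp
  also have "\<dots> = integral\<^sup>L M F" by (simp add: N.prob_space)
  finally show "(\<integral>\<omega>. F (fst \<omega>) \<partial>(M \<Otimes>\<^sub>M N)) = integral\<^sup>L M F" .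
qed

lemma pair_snd:
  fixes F :: "'b \<Rightarrow> 'c::{banach, second_countable_topology}"
  assumes M: "prob_space M" and N: "prob_space N" and f: "integrable N F"
  shows "integrable (M \<Otimes>\<^sub>M N) (\<lambda>\<omega>. F (snd \<omega>))"
    and "(\<integral>\<omega>. F (snd \<omega>) \<partial>(M \<Otimes>\<^sub>M N)) = integral\<^sup>L N F"
proof -
  interpret M: prob_space M by fact
  interpret N: prob_space N by fact
  interpret P: pair_sigma_finite M N
    by (simp add: M.sigma_finite_measure_axioms N.sigma_finite_measure_axioms pair_sigma_finite.intro)
  have [measurable]: "F \<in> borel_measurable N" using f by auto
  have "(\<integral>\<^sup>+ \<omega>. ennreal (norm (F (snd \<omega>))) \<partial>(M \<Otimes>\<^sub>M N))
      = (\<integral>\<^sup>+ x. \<integral>\<^sup>+ y. ennreal (norm (F y)) \<partial>N \<partial>M)"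
    by (subst N.nn_integral_fst[symmetric]) auto
  also have "\<dots> = (\<integral>\<^sup>+ y. ennreal (norm (F y)) \<partial>N)"
    by (simp add: M.emeasure_space_1)
  also have "\<dots> < \<infinity>" using f by (simp add: integrable_iff_bounded)
  finally show I: "integrable (M \<Otimes>\<^sub>M N) (\<lambda>\<omega>. F (snd \<omega>))"
    by (simp add: integrable_iff_bounded)
  have "(\<integral>\<omega>. F (snd \<omega>) \<partial>(M \<Otimes>\<^sub>M N)) = (\<integral>x. \<integral>y. F y \<partial>N \<partial>M)"
    using P.integral_fst'[OF I] by simp
  also have "\<dots> = integral\<^sup>L N F" by (simp add: M.prob_space)
  finally show "(\<integral>\<omega>. F (snd \<omega>) \<partial>(M \<Otimes>\<^sub>M N)) = integral\<^sup>L N F" .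
qed

lemma pair_inner:
  fixes F :: "'a \<Rightarrow> 'c::euclidean_space" and G :: "'b \<Rightarrow> 'c"
  assumes M: "prob_space M" and N: "prob_space N" and f: "integrable M F" and g: "integrable N G"
  shows "integrable (M \<Otimes>\<^sub>M N) (\<lambda>\<omega>. F (fst \<omega>) \<bullet> G (snd \<omega>))"
    and "(\<integral>\<omega>. F (fst \<omega>) \<bullet> G (snd \<omega>) \<partial>(M \<Otimes>\<^sub>M N)) = integral\<^sup>L M F \<bullet> integral\<^sup>L N G"
proof -
  have eq: "(\<lambda>\<omega>. F (fst \<omega>) \<bullet> G (snd \<omega>)) = (\<lambda>\<omega>. \<Sum>b\<in>Basis. (F (fst \<omega>) \<bullet> b) * (G (snd \<omega>) \<bullet> b))"
    by (rule ext, rule euclidean_inner)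
  have i: "integrable (M \<Otimes>\<^sub>M N) (\<lambda>\<omega>. (F (fst \<omega>) \<bullet> b) * (G (snd \<omega>) \<bullet> b))" for b
    by (rule pair_mult(1)[OF M N]) (use f g in auto)
  show "integrable (M \<Otimes>\<^sub>M N) (\<lambda>\<omega>. F (fst \<omega>) \<bullet> G (snd \<omega>))"
    unfolding eq using i by auto
  have "(\<integral>\<omega>. F (fst \<omega>) \<bullet> G (snd \<omega>) \<partial>(M \<Otimes>\<^sub>M N)) = (\<Sum>b\<in>Basis. (\<integral>\<omega>. (F (fst \<omega>) \<bullet> b) * (G (snd \<omega>) \<bullet> b) \<partial>(M \<Otimes>\<^sub>M N)))"
    unfolding eq using i by (simp add: integral_sum)
  also have "\<dots> = (\<Sum>b\<in>Basis. (integral\<^sup>L M F \<bullet> b) * (integral\<^sup>L N G \<bullet> b))"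
    by (rule sum.cong[OF refl], subst pair_mult(2)[OF M N]) (use f g in auto)
  also have "\<dots> = integral\<^sup>L M F \<bullet> integral\<^sup>L N G" by (rule euclidean_inner[symmetric])
  finally show "(\<integral>\<omega>. F (fst \<omega>) \<bullet> G (snd \<omega>) \<partial>(M \<Otimes>\<^sub>M N)) = integral\<^sup>L M F \<bullet> integral\<^sup>L N G" .
qed



lemma L4_lower:
  fixes F :: "'a \<Rightarrow> 'c::euclidean_space"
  assumes M: "prob_space M" and [measurable]: "F \<in> borel_measurable M"
    and f4: "integrable M (\<lambda>x. norm (F x) ^ 4)"
  shows "integrable M F" "integrable M (\<lambda>x. norm (F x) ^ 2)" "integrable M (\<lambda>x. norm (F x) ^ 3)"
    "integrable M (\<lambda>x. norm (F x) ^ 2 *\<^sub>R F x)"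
proof -
  interpret M: prob_space M by fact
  have bI: "integrable M (\<lambda>x. 1 + norm (F x) ^ 4)" using f4 by auto
  have b: "t ^ k \<le> 1 + t ^ 4" if "t \<ge> 0" "k \<le> 4" for t :: real and k
  proof (cases "t \<le> 1")
    case True then have "t ^ k \<le> 1" using that by (simp add: power_le_one)
    then show ?thesis using that by (smt (verit) zero_le_power)
  next
    case False then have "t ^ k \<le> t ^ 4" using that by (intro power_increasing) auto
    then show ?thesis by simp
  qed
  show "integrable M F"
    by (rule Bochner_Integration.integrable_bound[OF bI]) (use b[of _ 1] in auto)
  show "integrable M (\<lambda>x. norm (F x) ^ 2)"
    by (rule Bochner_Integration.integrable_bound[OF bI]) (use b[of _ 2] in auto)
  show "integrable M (\<lambda>x. norm (F x) ^ 3)"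
    by (rule Bochner_Integration.integrable_bound[OF bI]) (use b[of _ 3] in auto)
  show "integrable M (\<lambda>x. norm (F x) ^ 2 *\<^sub>R F x)"
    by (rule Bochner_Integration.integrable_bound[OF bI]) (use b[of _ 3] in \<open>auto simp: power3_eq_cube power2_eq_square\<close>)
qed

lemma norm4_expand:
  fixes x y :: "'c::real_inner"
  shows "norm (x + y) ^ 4 = (norm x ^ 2) * (norm x ^ 2) + (norm y ^ 2) * (norm y ^ 2) + 4 * (x \<bullet> y)^2
     + 2 * (norm x ^ 2 * norm y ^ 2) + 4 * ((norm x ^ 2 *\<^sub>R x) \<bullet> y) + 4 * (x \<bullet> (norm y ^ 2 *\<^sub>R y))"
proof -
  have "norm (x+y)^2 = norm x^2 + 2*(x \<bullet> y) + norm y^2"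
    by (simp add: power2_norm_eq_inner inner_add inner_commute)
  moreover have "norm (x+y)^4 = (norm (x+y)^2)^2" by simp
  ultimately show ?thesis by (simp add: power2_eq_square algebra_simps)
qed

lemma norm2_expand:
  fixes x y :: "'c::real_inner"
  shows "norm (x+y)^2 = norm x^2 + norm y^2 + 2*(x \<bullet> y)"
  by (simp add: power2_norm_eq_inner inner_add inner_commute)

lemma pair_moments:
  fixes X :: "'a \<Rightarrow> 'c::euclidean_space" and Y :: "'b \<Rightarrow> 'c"
  assumes M: "prob_space M" and N: "prob_space N"
    and [measurable]: "X \<in> borel_measurable M" "Y \<in> borel_measurable N"
    and X4: "integrable M (\<lambda>x. norm (X x) ^ 4)" and Y4: "integrable N (\<lambda>x. norm (Y x) ^ 4)"
    and X0: "integral\<^sup>L M X = 0" and Y0: "integral\<^sup>L N Y = 0"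
  shows "integrable (M \<Otimes>\<^sub>M N) (\<lambda>\<omega>. norm (X (fst \<omega>) + Y (snd \<omega>)) ^ 4)"
    "(\<integral>\<omega>. X (fst \<omega>) + Y (snd \<omega>) \<partial>(M \<Otimes>\<^sub>M N)) = 0"
    "(\<integral>\<omega>. norm (X (fst \<omega>) + Y (snd \<omega>)) ^ 2 \<partial>(M \<Otimes>\<^sub>M N))
       = (\<integral>x. norm (X x) ^ 2 \<partial>M) + (\<integral>y. norm (Y y) ^ 2 \<partial>N)"
    "(\<integral>\<omega>. norm (X (fst \<omega>) + Y (snd \<omega>)) ^ 4 \<partial>(M \<Otimes>\<^sub>M N))
       \<le> (\<integral>x. norm (X x) ^ 4 \<partial>M) + (\<integral>y. norm (Y y) ^ 4 \<partial>N)
          + 6 * ((\<integral>x. norm (X x) ^ 2 \<partial>M) * (\<integral>y. norm (Y y) ^ 2 \<partial>N))"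
proof -
  note XL = L4_lower[OF M assms(3) X4] and YL = L4_lower[OF N assms(4) Y4]
  let ?P = "M \<Otimes>\<^sub>M N"
  have X4': "integrable M (\<lambda>x. norm (X x) ^ 2 * norm (X x) ^ 2)"
    using X4 by (simp add: power2_eq_square power4_eq_xxxx mult.assoc)
  have Y4': "integrable N (\<lambda>x. norm (Y x) ^ 2 * norm (Y x) ^ 2)"
    using Y4 by (simp add: power2_eq_square power4_eq_xxxx mult.assoc)
  have i1: "integrable ?P (\<lambda>\<omega>. norm (X (fst \<omega>)) ^ 2 * norm (X (fst \<omega>)) ^ 2)"
    by (rule pair_fst(1)[OF M N X4'])
  have i2: "integrable ?P (\<lambda>\<omega>. norm (Y (snd \<omega>)) ^ 2 * norm (Y (snd \<omega>)) ^ 2)"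
    by (rule pair_snd(1)[OF M N Y4'])
  have i4: "integrable ?P (\<lambda>\<omega>. norm (X (fst \<omega>)) ^ 2 * norm (Y (snd \<omega>)) ^ 2)"
    by (rule pair_mult(1)[OF M N XL(2) YL(2)])
  have i3: "integrable ?P (\<lambda>\<omega>. (X (fst \<omega>) \<bullet> Y (snd \<omega>))^2)"
  proof (rule Bochner_Integration.integrable_bound[OF i4])
    show "AE \<omega> in ?P. norm ((X (fst \<omega>) \<bullet> Y (snd \<omega>))^2) \<le> norm (norm (X (fst \<omega>)) ^ 2 * norm (Y (snd \<omega>)) ^ 2)"
    proof (rule AE_I2)
      fix \<omega>
      have "\<bar>X (fst \<omega>) \<bullet> Y (snd \<omega>)\<bar> \<le> norm (X (fst \<omega>)) * norm (Y (snd \<omega>))"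
        by (rule Cauchy_Schwarz_ineq2)
      then have "(X (fst \<omega>) \<bullet> Y (snd \<omega>))^2 \<le> (norm (X (fst \<omega>)) * norm (Y (snd \<omega>)))^2"
        by (metis abs_ge_zero power2_abs power_mono)
      then show "norm ((X (fst \<omega>) \<bullet> Y (snd \<omega>))^2) \<le> norm (norm (X (fst \<omega>)) ^ 2 * norm (Y (snd \<omega>)) ^ 2)"
        by (simp add: power_mult_distrib)
    qed
  qed measurable
  have i5: "integrable ?P (\<lambda>\<omega>. (norm (X (fst \<omega>)) ^ 2 *\<^sub>R X (fst \<omega>)) \<bullet> Y (snd \<omega>))"
    by (rule pair_inner(1)[OF M N XL(4) YL(1)])
  have i6: "integrable ?P (\<lambda>\<omega>. X (fst \<omega>) \<bullet> (norm (Y (snd \<omega>)) ^ 2 *\<^sub>R Y (snd \<omega>)))"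
    by (rule pair_inner(1)[OF M N XL(1) YL(4)])
  have e5: "(\<integral>\<omega>. (norm (X (fst \<omega>)) ^ 2 *\<^sub>R X (fst \<omega>)) \<bullet> Y (snd \<omega>) \<partial>?P) = 0"
    by (subst pair_inner(2)[OF M N XL(4) YL(1)]) (simp add: Y0)
  have e6: "(\<integral>\<omega>. X (fst \<omega>) \<bullet> (norm (Y (snd \<omega>)) ^ 2 *\<^sub>R Y (snd \<omega>)) \<partial>?P) = 0"
    by (subst pair_inner(2)[OF M N XL(1) YL(4)]) (simp add: X0)
  have e4: "(\<integral>\<omega>. norm (X (fst \<omega>)) ^ 2 * norm (Y (snd \<omega>)) ^ 2 \<partial>?P)
     = (\<integral>x. norm (X x) ^ 2 \<partial>M) * (\<integral>y. norm (Y y) ^ 2 \<partial>N)"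
    by (rule pair_mult(2)[OF M N XL(2) YL(2)])
  have e1: "(\<integral>\<omega>. norm (X (fst \<omega>)) ^ 2 * norm (X (fst \<omega>)) ^ 2 \<partial>?P) = (\<integral>x. norm (X x) ^ 4 \<partial>M)"
    by (subst pair_fst(2)[OF M N X4']) (simp add: power2_eq_square power4_eq_xxxx mult.assoc)
  have e2: "(\<integral>\<omega>. norm (Y (snd \<omega>)) ^ 2 * norm (Y (snd \<omega>)) ^ 2 \<partial>?P) = (\<integral>x. norm (Y x) ^ 4 \<partial>N)"
    by (subst pair_snd(2)[OF M N Y4']) (simp add: power2_eq_square power4_eq_xxxx mult.assoc)
  have e3: "(\<integral>\<omega>. (X (fst \<omega>) \<bullet> Y (snd \<omega>))^2 \<partial>?P) \<le> (\<integral>\<omega>. norm (X (fst \<omega>)) ^ 2 * norm (Y (snd \<omega>)) ^ 2 \<partial>?P)"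
  proof (rule integral_mono[OF i3 i4])
    fix \<omega>
    have "\<bar>X (fst \<omega>) \<bullet> Y (snd \<omega>)\<bar> \<le> norm (X (fst \<omega>)) * norm (Y (snd \<omega>))"
      by (rule Cauchy_Schwarz_ineq2)
    then have "(X (fst \<omega>) \<bullet> Y (snd \<omega>))^2 \<le> (norm (X (fst \<omega>)) * norm (Y (snd \<omega>)))^2"
      by (metis abs_ge_zero power2_abs power_mono)
    then show "(X (fst \<omega>) \<bullet> Y (snd \<omega>))^2 \<le> norm (X (fst \<omega>)) ^ 2 * norm (Y (snd \<omega>)) ^ 2"
      by (simp add: power_mult_distrib)
  qed
  have eq4: "(\<lambda>\<omega>. norm (X (fst \<omega>) + Y (snd \<omega>)) ^ 4) = (\<lambda>\<omega>.
      norm (X (fst \<omega>)) ^ 2 * norm (X (fst \<omega>)) ^ 2 + norm (Y (snd \<omega>)) ^ 2 * norm (Y (snd \<omega>)) ^ 2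
      + 4 * (X (fst \<omega>) \<bullet> Y (snd \<omega>))^2 + 2 * (norm (X (fst \<omega>)) ^ 2 * norm (Y (snd \<omega>)) ^ 2)
      + 4 * ((norm (X (fst \<omega>)) ^ 2 *\<^sub>R X (fst \<omega>)) \<bullet> Y (snd \<omega>))
      + 4 * (X (fst \<omega>) \<bullet> (norm (Y (snd \<omega>)) ^ 2 *\<^sub>R Y (snd \<omega>))))"
    by (rule ext, rule norm4_expand)
  show "integrable ?P (\<lambda>\<omega>. norm (X (fst \<omega>) + Y (snd \<omega>)) ^ 4)"
    unfolding eq4 using i1 i2 i3 i4 i5 i6 by auto
  have "(\<integral>\<omega>. norm (X (fst \<omega>) + Y (snd \<omega>)) ^ 4 \<partial>?P)
     = (\<integral>x. norm (X x) ^ 4 \<partial>M) + (\<integral>x. norm (Y x) ^ 4 \<partial>N)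
       + 4 * (\<integral>\<omega>. (X (fst \<omega>) \<bullet> Y (snd \<omega>))^2 \<partial>?P)
       + 2 * ((\<integral>x. norm (X x) ^ 2 \<partial>M) * (\<integral>y. norm (Y y) ^ 2 \<partial>N))"
    unfolding eq4 using i1 i2 i3 i4 i5 i6 e1 e2 e4 e5 e6 by simp
  then show "(\<integral>\<omega>. norm (X (fst \<omega>) + Y (snd \<omega>)) ^ 4 \<partial>?P)
       \<le> (\<integral>x. norm (X x) ^ 4 \<partial>M) + (\<integral>y. norm (Y y) ^ 4 \<partial>N)
          + 6 * ((\<integral>x. norm (X x) ^ 2 \<partial>M) * (\<integral>y. norm (Y y) ^ 2 \<partial>N))"
    using e3 e4 by linarith
  have j1: "integrable ?P (\<lambda>\<omega>. X (fst \<omega>))" by (rule pair_fst(1)[OF M N XL(1)])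
  have j2: "integrable ?P (\<lambda>\<omega>. Y (snd \<omega>))" by (rule pair_snd(1)[OF M N YL(1)])
  show "(\<integral>\<omega>. X (fst \<omega>) + Y (snd \<omega>) \<partial>?P) = 0"
    using j1 j2 pair_fst(2)[OF M N XL(1)] pair_snd(2)[OF M N YL(1)] X0 Y0 by simp
  have eq2: "(\<lambda>\<omega>. norm (X (fst \<omega>) + Y (snd \<omega>)) ^ 2) = (\<lambda>\<omega>.
     norm (X (fst \<omega>)) ^ 2 + norm (Y (snd \<omega>)) ^ 2 + 2 * (X (fst \<omega>) \<bullet> Y (snd \<omega>)))"
    by (rule ext, rule norm2_expand)
  have k1: "integrable ?P (\<lambda>\<omega>. norm (X (fst \<omega>)) ^ 2)" by (rule pair_fst(1)[OF M N XL(2)])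
  have k2: "integrable ?P (\<lambda>\<omega>. norm (Y (snd \<omega>)) ^ 2)" by (rule pair_snd(1)[OF M N YL(2)])
  have k3: "integrable ?P (\<lambda>\<omega>. X (fst \<omega>) \<bullet> Y (snd \<omega>))" by (rule pair_inner(1)[OF M N XL(1) YL(1)])
  show "(\<integral>\<omega>. norm (X (fst \<omega>) + Y (snd \<omega>)) ^ 2 \<partial>?P)
       = (\<integral>x. norm (X x) ^ 2 \<partial>M) + (\<integral>y. norm (Y y) ^ 2 \<partial>N)"
    unfolding eq2 using k1 k2 k3 pair_fst(2)[OF M N XL(2)] pair_snd(2)[OF M N YL(2)]
      pair_inner(2)[OF M N XL(1) YL(1)] X0 by simp
qed



lemma pim_insert:
  fixes F :: "(nat \<Rightarrow> 'x) \<Rightarrow> 'c::{banach,second_countable_topology}"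
  assumes D: "prob_space D" and Fm: "F \<in> borel_measurable (PiM {..<Suc n} (\<lambda>_. D))"
    and Fi: "integrable (PiM {..<n} (\<lambda>_. D) \<Otimes>\<^sub>M D) (\<lambda>\<omega>. F ((fst \<omega>)(n := snd \<omega>)))"
  shows "integrable (PiM {..<Suc n} (\<lambda>_. D)) F"
    "integral\<^sup>L (PiM {..<Suc n} (\<lambda>_. D)) F = (\<integral>\<omega>. F ((fst \<omega>)(n := snd \<omega>)) \<partial>(PiM {..<n} (\<lambda>_. D) \<Otimes>\<^sub>M D))"
proof -
  interpret D: prob_space D by fact
  interpret P: product_sigma_finite "\<lambda>_. D"
    by (simp add: product_sigma_finite_def D.sigma_finite_measure_axioms)
  interpret Q: pair_sigma_finite "PiM {..<n} (\<lambda>_. D)" D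
    by (simp add: pair_sigma_finite_def D.sigma_finite_measure_axioms P.sigma_finite)
  have ins: "{..<Suc n} = insert n {..<n}" by auto
  have Fm': "F \<in> borel_measurable (PiM (insert n {..<n}) (\<lambda>_. D))" using Fm by (simp add: ins)
  have m2: "(\<lambda>\<omega>. F ((fst \<omega>)(n := snd \<omega>))) \<in> borel_measurable (PiM {..<n} (\<lambda>_. D) \<Otimes>\<^sub>M D)"
    using Fi by auto
  have "(\<integral>\<^sup>+ x. ennreal (norm (F x)) \<partial>PiM (insert n {..<n}) (\<lambda>_. D))
     = (\<integral>\<^sup>+ x. \<integral>\<^sup>+ y. ennreal (norm (F (x(n := y)))) \<partial>D \<partial>PiM {..<n} (\<lambda>_. D))"
    by (rule P.product_nn_integral_insert) (use Fm' in auto)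
  also have "\<dots> = (\<integral>\<^sup>+ \<omega>. ennreal (norm (F ((fst \<omega>)(n := snd \<omega>)))) \<partial>(PiM {..<n} (\<lambda>_. D) \<Otimes>\<^sub>M D))"
    by (subst D.nn_integral_fst[symmetric]) (use m2 in auto)
  also have "\<dots> < \<infinity>" using Fi by (simp add: integrable_iff_bounded)
  finally show I: "integrable (PiM {..<Suc n} (\<lambda>_. D)) F"
    using Fm' by (simp add: integrable_iff_bounded ins)
  have "integral\<^sup>L (PiM (insert n {..<n}) (\<lambda>_. D)) F = (\<integral>x. \<integral>y. F (x(n := y)) \<partial>D \<partial>PiM {..<n} (\<lambda>_. D))"
    by (rule P.product_integral_insert) (use I in \<open>auto simp: ins\<close>)
  also have "\<dots> = (\<integral>\<omega>. F ((fst \<omega>)(n := snd \<omega>)) \<partial>(PiM {..<n} (\<lambda>_. D) \<Otimes>\<^sub>M D))"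
    using Q.integral_fst'[OF Fi] by simp
  finally show "integral\<^sup>L (PiM {..<Suc n} (\<lambda>_. D)) F = (\<integral>\<omega>. F ((fst \<omega>)(n := snd \<omega>)) \<partial>(PiM {..<n} (\<lambda>_. D) \<Otimes>\<^sub>M D))"
    by (simp add: ins)
qed

lemma Ssum_meas:
  fixes g :: "'x \<Rightarrow> 'a::euclidean_space"
  assumes [measurable]: "g \<in> borel_measurable D"
  shows "(\<lambda>xs. \<Sum>s<n. g (xs s)) \<in> borel_measurable (PiM {..<n} (\<lambda>_. D))"
proof (rule borel_measurable_sum)
  fix s assume "s \<in> {..<n}"
  then show "(\<lambda>xs. g (xs s)) \<in> borel_measurable (PiM {..<n} (\<lambda>_. D))"
    by measurable
qed

lemma pim_moments:
  fixes g :: "'x \<Rightarrow> 'a::euclidean_space"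
  assumes D: "prob_space D" and gm[measurable]: "g \<in> borel_measurable D"
    and g4: "integrable D (\<lambda>x. norm (g x) ^ 4)" and g0: "integral\<^sup>L D g = 0"
  shows "integrable (PiM {..<n} (\<lambda>_. D)) (\<lambda>xs. norm (\<Sum>s<n. g (xs s)) ^ 4)
     \<and> (\<integral>xs. (\<Sum>s<n. g (xs s)) \<partial>PiM {..<n} (\<lambda>_. D)) = 0
     \<and> (\<integral>xs. norm (\<Sum>s<n. g (xs s)) ^ 2 \<partial>PiM {..<n} (\<lambda>_. D)) = real n * (\<integral>x. norm (g x) ^ 2 \<partial>D)
     \<and> (\<integral>xs. norm (\<Sum>s<n. g (xs s)) ^ 4 \<partial>PiM {..<n} (\<lambda>_. D))
          \<le> real n * (\<integral>x. norm (g x) ^ 4 \<partial>D) + 3 * real n * (real n - 1) * (\<integral>x. norm (g x) ^ 2 \<partial>D) ^ 2"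
proof (induction n)
  case 0
  interpret P0: prob_space "PiM {..<0::nat} (\<lambda>_. D)" by (rule prob_space_PiM) (use D in auto)
  show ?case by simp
next
  case (Suc n)
  interpret P: prob_space "PiM {..<n} (\<lambda>_. D)" by (rule prob_space_PiM) (use D in auto)
  let ?S = "\<lambda>xs. \<Sum>s<n. g (xs s)"
  have eqS: "(\<Sum>s<Suc n. g ((x(n := y)) s)) = ?S x + g y" for x y
    by (simp add: sum.lessThan_Suc)
  have PM: "prob_space (PiM {..<n} (\<lambda>_. D))" by (rule P.prob_space_axioms)
  note pm = pair_moments[OF PM D Ssum_meas[OF gm, of n] gm _ g4]
  have pm1: "integrable (PiM {..<n} (\<lambda>_. D) \<Otimes>\<^sub>M D) (\<lambda>\<omega>. norm (?S (fst \<omega>) + g (snd \<omega>)) ^ 4)"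
    using pm Suc.IH g0 by blast
  have pm2: "(\<integral>\<omega>. ?S (fst \<omega>) + g (snd \<omega>) \<partial>(PiM {..<n} (\<lambda>_. D) \<Otimes>\<^sub>M D)) = 0"
    using pm Suc.IH g0 by blast
  have pm3: "(\<integral>\<omega>. norm (?S (fst \<omega>) + g (snd \<omega>)) ^ 2 \<partial>(PiM {..<n} (\<lambda>_. D) \<Otimes>\<^sub>M D))
       = (\<integral>x. norm (?S x) ^ 2 \<partial>PiM {..<n} (\<lambda>_. D)) + (\<integral>y. norm (g y) ^ 2 \<partial>D)"
    using pm Suc.IH g0 by blast
  have pm4: "(\<integral>\<omega>. norm (?S (fst \<omega>) + g (snd \<omega>)) ^ 4 \<partial>(PiM {..<n} (\<lambda>_. D) \<Otimes>\<^sub>M D))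
       \<le> (\<integral>x. norm (?S x) ^ 4 \<partial>PiM {..<n} (\<lambda>_. D)) + (\<integral>y. norm (g y) ^ 4 \<partial>D)
          + 6 * ((\<integral>x. norm (?S x) ^ 2 \<partial>PiM {..<n} (\<lambda>_. D)) * (\<integral>y. norm (g y) ^ 2 \<partial>D))"
    using pm Suc.IH g0 by blast
  have XL: "integrable (PiM {..<n} (\<lambda>_. D)) ?S" "integrable (PiM {..<n} (\<lambda>_. D)) (\<lambda>x. norm (?S x) ^ 2)"
    using L4_lower[OF PM Ssum_meas[OF gm]] Suc.IH by auto
  have YL: "integrable D g" "integrable D (\<lambda>x. norm (g x) ^ 2)"
    using L4_lower[OF D gm g4] by auto
  have m4: "(\<lambda>xs. norm (\<Sum>s<Suc n. g (xs s)) ^ 4) \<in> borel_measurable (PiM {..<Suc n} (\<lambda>_. D))"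
    using Ssum_meas[OF gm, of "Suc n"] by measurable
  have m2: "(\<lambda>xs. norm (\<Sum>s<Suc n. g (xs s)) ^ 2) \<in> borel_measurable (PiM {..<Suc n} (\<lambda>_. D))"
    using Ssum_meas[OF gm, of "Suc n"] by measurable
  have i1: "integrable (PiM {..<n} (\<lambda>_. D) \<Otimes>\<^sub>M D) (\<lambda>\<omega>. ?S (fst \<omega>) + g (snd \<omega>))"
    using pair_fst(1)[OF PM D XL(1)] pair_snd(1)[OF PM D YL(1)] by auto
  have i2: "integrable (PiM {..<n} (\<lambda>_. D) \<Otimes>\<^sub>M D) (\<lambda>\<omega>. norm (?S (fst \<omega>) + g (snd \<omega>)) ^ 2)"
    using L4_lower(2)[OF prob_space_pair[OF PM D] _ pm1] by measurable
  note T4 = pim_insert[OF D m4, unfolded eqS, OF pm1]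
  note T2 = pim_insert[OF D m2, unfolded eqS, OF i2]
  note T1 = pim_insert[OF D Ssum_meas[OF gm, of "Suc n"], unfolded eqS, OF i1]
  define v where "v = (\<integral>y. norm (g y) ^ 2 \<partial>D)"
  define M4 where "M4 = (\<integral>y. norm (g y) ^ 4 \<partial>D)"
  have v0: "v \<ge> 0" unfolding v_def by simp
  have IH2: "(\<integral>x. norm (?S x) ^ 2 \<partial>PiM {..<n} (\<lambda>_. D)) = real n * v" using Suc.IH v_def by blast
  have IH4: "(\<integral>x. norm (?S x) ^ 4 \<partial>PiM {..<n} (\<lambda>_. D)) \<le> real n * M4 + 3 * real n * (real n - 1) * v^2"
    using Suc.IH v_def M4_def by blast
  have fin4: "(\<integral>xs. norm (\<Sum>s<Suc n. g (xs s)) ^ 4 \<partial>PiM {..<Suc n} (\<lambda>_. D))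
      \<le> real (Suc n) * M4 + 3 * real (Suc n) * (real (Suc n) - 1) * v^2"
  proof -
    have "(\<integral>xs. norm (\<Sum>s<Suc n. g (xs s)) ^ 4 \<partial>PiM {..<Suc n} (\<lambda>_. D))
       \<le> real n * M4 + 3 * real n * (real n - 1) * v^2 + M4 + 6 * (real n * v * v)"
      using T4(2) pm4 IH4 IH2 unfolding v_def[symmetric] M4_def[symmetric] by (simp add: mult.assoc)
    also have "\<dots> = real (Suc n) * M4 + 3 * real (Suc n) * (real (Suc n) - 1) * v^2"
      by (simp add: algebra_simps power2_eq_square)
    finally show ?thesis .
  qed
  show ?case
    using T4(1) fin4 T1(2) pm2 T2(2) pm3 IH2 unfolding v_def[symmetric] M4_def[symmetric]
    by (simp add: algebra_simps)
qed



lemma ab_le_sq: "\<bar>u\<bar> * \<bar>w\<bar> \<le> u^2 + (w::real)^2"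
proof -
  have "0 \<le> (\<bar>u\<bar> - \<bar>w\<bar>)^2" by simp
  then have "2 * (\<bar>u\<bar> * \<bar>w\<bar>) \<le> u^2 + w^2" by (simp add: power2_eq_square algebra_simps)
  moreover have "0 \<le> \<bar>u\<bar> * \<bar>w\<bar>" by simp
  ultimately show ?thesis by linarith
qed

lemma sq_add_le: "(u + w)^2 \<le> 2 * u^2 + 2 * (w::real)^2"
proof -
  have "0 \<le> (u - w)^2" by simp
  then show ?thesis by (simp add: power2_eq_square algebra_simps)
qed

lemma t_le_sq: "(t::real) \<le> 1 + t^2"
proof (cases "t \<le> 1")
  case True then show ?thesis by (smt (z3) zero_le_power2)
next
  case False then have "t * 1 \<le> t * t" by (intro mult_left_mono) auto
  then show ?thesis by (simp add: power2_eq_square)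
qed

lemma sqi_add:
  fixes f g :: "'a \<Rightarrow> real"
  assumes [measurable]: "f \<in> borel_measurable M" "g \<in> borel_measurable M"
    and "integrable M (\<lambda>x. (f x)^2)" "integrable M (\<lambda>x. (g x)^2)"
  shows "integrable M (\<lambda>x. (f x + g x)^2)"
proof (rule Bochner_Integration.integrable_bound)
  show "integrable M (\<lambda>x. 2 * (f x)^2 + 2 * (g x)^2)" using assms by auto
  show "AE x in M. norm ((f x + g x)^2) \<le> norm (2 * (f x)^2 + 2 * (g x)^2)"
  proof (rule AE_I2)
    fix x have "(f x + g x)^2 \<le> 2 * (f x)^2 + 2 * (g x)^2"
      by (rule sq_add_le)
    then show "norm ((f x + g x)^2) \<le> norm (2 * (f x)^2 + 2 * (g x)^2)" by simp
  qed
qed measurable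

lemma sqi_mult:
  fixes f g :: "'a \<Rightarrow> real"
  assumes [measurable]: "f \<in> borel_measurable M" "g \<in> borel_measurable M"
    and "integrable M (\<lambda>x. (f x)^2)" "integrable M (\<lambda>x. (g x)^2)"
  shows "integrable M (\<lambda>x. f x * g x)"
proof (rule Bochner_Integration.integrable_bound)
  show "integrable M (\<lambda>x. (f x)^2 + (g x)^2)" using assms by auto
  show "AE x in M. norm (f x * g x) \<le> norm ((f x)^2 + (g x)^2)"
  proof (rule AE_I2)
    fix x have "\<bar>f x * g x\<bar> \<le> (f x)^2 + (g x)^2"
      using ab_le_sq[of "f x" "g x"] by (simp add: abs_mult)
    then show "norm (f x * g x) \<le> norm ((f x)^2 + (g x)^2)" by simp
  qed
qed measurable

lemma sqi_bound:
  fixes f g :: "'a \<Rightarrow> real"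
  assumes [measurable]: "f \<in> borel_measurable M"
    and "integrable M (\<lambda>x. (g x)^2)" and "\<And>x. \<bar>f x\<bar> \<le> \<bar>g x\<bar>"
  shows "integrable M (\<lambda>x. (f x)^2)"
proof (rule Bochner_Integration.integrable_bound[OF assms(2)])
  show "AE x in M. norm ((f x)^2) \<le> norm ((g x)^2)"
    using assms(3) by (auto intro!: AE_I2 simp: abs_le_square_iff[symmetric])
qed measurable

lemma inner_sq_le: "((x::'c::real_inner) \<bullet> y)^2 \<le> norm x ^ 2 * norm y ^ 2"
proof -
  have "\<bar>x \<bullet> y\<bar> \<le> norm x * norm y" by (rule Cauchy_Schwarz_ineq2)
  then have "(x \<bullet> y)^2 \<le> (norm x * norm y)^2"
    by (metis abs_ge_zero power2_abs power_mono)
  then show ?thesis by (simp add: power_mult_distrib)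
qed

lemma L2_lower:
  fixes F :: "'a \<Rightarrow> 'c::{banach,second_countable_topology}"
  assumes M: "prob_space M" and [measurable]: "F \<in> borel_measurable M"
    and f2: "integrable M (\<lambda>x. norm (F x) ^ 2)"
  shows "integrable M F"
proof -
  interpret M: prob_space M by fact
  have bI: "integrable M (\<lambda>x. 1 + norm (F x) ^ 2)" using f2 by auto
  have b: "t \<le> 1 + t ^ 2" for t :: real
    by (rule t_le_sq)
  show "integrable M F"
    by (rule Bochner_Integration.integrable_bound[OF bI]) (use b in auto)
qed

lemma coreP:
  fixes a :: "'r \<Rightarrow> 'c::euclidean_space" and \<delta> :: "'c" and H :: "'p \<Rightarrow> 'c" and K :: "'p \<Rightarrow> real"
  assumes AB: "prob_space AB" and MD: "prob_space MD"
    and [measurable]: "a \<in> borel_measurable MD" "H \<in> borel_measurable AB" "K \<in> borel_measurable AB"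
    and a2: "integrable MD (\<lambda>x. norm (a x)^2)" and a0: "integral\<^sup>L MD a = 0"
    and H2: "integrable AB (\<lambda>x. norm (H x)^2)" and H0: "integral\<^sup>L AB H = 0"
    and K2: "integrable AB (\<lambda>x. (K x)^2)"
  defines "W \<equiv> \<lambda>\<omega>. 2 * (a (snd \<omega>) \<bullet> (H (fst \<omega>) - \<delta>)) + K (fst \<omega>)"
  shows "integrable (AB \<Otimes>\<^sub>M MD) (\<lambda>\<omega>. (W \<omega>)^2)"
    "(\<integral>\<omega>. (W \<omega>)^2 \<partial>(AB \<Otimes>\<^sub>M MD)) \<le> 4 * (\<integral>x. (a x \<bullet> \<delta>)^2 \<partial>MD)
        + 4 * (\<integral>x. norm (a x)^2 \<partial>MD) * (\<integral>x. norm (H x)^2 \<partial>AB) + (\<integral>x. (K x)^2 \<partial>AB)"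
proof -
  let ?P = "AB \<Otimes>\<^sub>M MD"
  interpret AB: prob_space AB by fact
  interpret MD: prob_space MD by fact
  interpret P: prob_space ?P by (rule prob_space_pair[OF AB MD])
  have aI: "integrable MD a" by (rule L2_lower[OF MD _ a2]) simp
  have HI: "integrable AB H" by (rule L2_lower[OF AB _ H2]) simp
  have KI: "integrable AB K" using sqi_mult[OF _ _ K2, of "\<lambda>_. 1"] by simp
  have ad2: "integrable MD (\<lambda>x. (a x \<bullet> \<delta>)^2)"
  proof (rule Bochner_Integration.integrable_bound)
    show "integrable MD (\<lambda>x. norm \<delta> ^ 2 * norm (a x)^2)" using a2 by auto
    show "AE x in MD. norm ((a x \<bullet> \<delta>)^2) \<le> norm (norm \<delta> ^ 2 * norm (a x)^2)"
    proof (rule AE_I2)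
      fix x show "norm ((a x \<bullet> \<delta>)^2) \<le> norm (norm \<delta> ^ 2 * norm (a x)^2)"
        using inner_sq_le[of "a x" \<delta>] by (simp add: mult.commute)
    qed
  qed measurable
  have adaI: "integrable MD (\<lambda>x. (a x \<bullet> \<delta>) *\<^sub>R a x)"
  proof (rule Bochner_Integration.integrable_bound)
    show "integrable MD (\<lambda>x. norm \<delta> * norm (a x)^2)" using a2 by auto
    show "AE x in MD. norm ((a x \<bullet> \<delta>) *\<^sub>R a x) \<le> norm (norm \<delta> * norm (a x)^2)"
    proof (rule AE_I2)
      fix x have "\<bar>a x \<bullet> \<delta>\<bar> * norm (a x) \<le> (norm (a x) * norm \<delta>) * norm (a x)"
        by (intro mult_right_mono Cauchy_Schwarz_ineq2) auto
      then show "norm ((a x \<bullet> \<delta>) *\<^sub>R a x) \<le> norm (norm \<delta> * norm (a x)^2)"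
        by (simp add: power2_eq_square mult_ac)
    qed
  qed measurable
  have KHI: "integrable AB (\<lambda>x. K x *\<^sub>R H x)"
  proof (rule Bochner_Integration.integrable_bound)
    show "integrable AB (\<lambda>x. (K x)^2 + norm (H x)^2)" using K2 H2 by auto
    show "AE x in AB. norm (K x *\<^sub>R H x) \<le> norm ((K x)^2 + norm (H x)^2)"
    proof (rule AE_I2)
      fix x have "\<bar>K x\<bar> * norm (H x) \<le> (K x)^2 + norm (H x)^2"
        using ab_le_sq[of "K x" "norm (H x)"] by simp
      then show "norm (K x *\<^sub>R H x) \<le> norm ((K x)^2 + norm (H x)^2)" by simp
    qed
  qed measurable
  define X where "X = (\<lambda>\<omega>. a (snd \<omega>) \<bullet> H (fst \<omega>))"
  define Y where "Y = (\<lambda>\<omega>::'p \<times> 'r. a (snd \<omega>) \<bullet> \<delta>)"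
  define Kf where "Kf = (\<lambda>\<omega>::'p \<times> 'r. K (fst \<omega>))"
  have [measurable]: "X \<in> borel_measurable ?P" "Y \<in> borel_measurable ?P" "Kf \<in> borel_measurable ?P"
    unfolding X_def Y_def Kf_def by measurable
  have HaI: "integrable ?P (\<lambda>\<omega>. norm (H (fst \<omega>))^2 * norm (a (snd \<omega>))^2)"
    by (rule pair_mult(1)[OF AB MD H2 a2])
  have X2: "integrable ?P (\<lambda>\<omega>. (X \<omega>)^2)"
  proof (rule Bochner_Integration.integrable_bound[OF HaI])
    show "AE \<omega> in ?P. norm ((X \<omega>)^2) \<le> norm (norm (H (fst \<omega>))^2 * norm (a (snd \<omega>))^2)"
    proof (rule AE_I2)
      fix \<omega> show "norm ((X \<omega>)^2) \<le> norm (norm (H (fst \<omega>))^2 * norm (a (snd \<omega>))^2)"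
        unfolding X_def using inner_sq_le[of "a (snd \<omega>)" "H (fst \<omega>)"] by (simp add: mult.commute)
    qed
  qed measurable
  have Y2: "integrable ?P (\<lambda>\<omega>. (Y \<omega>)^2)" unfolding Y_def by (rule pair_snd(1)[OF AB MD ad2])
  have K2': "integrable ?P (\<lambda>\<omega>. (Kf \<omega>)^2)" unfolding Kf_def by (rule pair_fst(1)[OF AB MD K2])
  have XY: "integrable ?P (\<lambda>\<omega>. X \<omega> * Y \<omega>)" by (rule sqi_mult[OF _ _ X2 Y2]) measurable
  have XK: "integrable ?P (\<lambda>\<omega>. X \<omega> * Kf \<omega>)" by (rule sqi_mult[OF _ _ X2 K2']) measurable
  have YK: "integrable ?P (\<lambda>\<omega>. Y \<omega> * Kf \<omega>)" by (rule sqi_mult[OF _ _ Y2 K2']) measurable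
  have Weq: "(\<lambda>\<omega>. (W \<omega>)^2) = (\<lambda>\<omega>. 4 * (X \<omega>)^2 + 4 * (Y \<omega>)^2 + (Kf \<omega>)^2 - 8 * (X \<omega> * Y \<omega>)
      + 4 * (X \<omega> * Kf \<omega>) - 4 * (Y \<omega> * Kf \<omega>))"
  proof (rule ext)
    fix \<omega>
    have "W \<omega> = 2 * (X \<omega> - Y \<omega>) + Kf \<omega>" unfolding W_def X_def Y_def Kf_def by (simp add: inner_diff_right)
    moreover have "(2 * (x - y) + k)^2 = 4 * x^2 + 4 * y^2 + k^2 - 8 * (x * y) + 4 * (x * k) - 4 * (y * k)" for x y k :: real
      by (simp add: power2_eq_square algebra_simps)
    ultimately show "(W \<omega>)^2 = 4 * (X \<omega>)^2 + 4 * (Y \<omega>)^2 + (Kf \<omega>)^2 - 8 * (X \<omega> * Y \<omega>)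
      + 4 * (X \<omega> * Kf \<omega>) - 4 * (Y \<omega> * Kf \<omega>)" by simp
  qed
  show "integrable ?P (\<lambda>\<omega>. (W \<omega>)^2)" unfolding Weq
    by (intro Bochner_Integration.integrable_add Bochner_Integration.integrable_diff integrable_mult_right X2 Y2 K2' XY XK YK)
  have eX2: "(\<integral>\<omega>. (X \<omega>)^2 \<partial>?P) \<le> (\<integral>x. norm (H x)^2 \<partial>AB) * (\<integral>x. norm (a x)^2 \<partial>MD)"
  proof -
    have "(\<integral>\<omega>. (X \<omega>)^2 \<partial>?P) \<le> (\<integral>\<omega>. norm (H (fst \<omega>))^2 * norm (a (snd \<omega>))^2 \<partial>?P)"
    proof (rule integral_mono[OF X2 HaI])
      fix \<omega> show "(X \<omega>)^2 \<le> norm (H (fst \<omega>))^2 * norm (a (snd \<omega>))^2"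
        unfolding X_def using inner_sq_le[of "a (snd \<omega>)" "H (fst \<omega>)"] by (simp add: mult.commute)
    qed
    also have "\<dots> = (\<integral>x. norm (H x)^2 \<partial>AB) * (\<integral>x. norm (a x)^2 \<partial>MD)"
      by (rule pair_mult(2)[OF AB MD H2 a2])
    finally show ?thesis .
  qed
  have eXY: "(\<integral>\<omega>. X \<omega> * Y \<omega> \<partial>?P) = 0"
  proof -
    have "(\<lambda>\<omega>. X \<omega> * Y \<omega>) = (\<lambda>\<omega>. H (fst \<omega>) \<bullet> ((a (snd \<omega>) \<bullet> \<delta>) *\<^sub>R a (snd \<omega>)))"
      by (rule ext) (simp add: X_def Y_def inner_commute)
    then show ?thesis using pair_inner(2)[OF AB MD HI adaI] H0 by simp
  qed
  have eXK: "(\<integral>\<omega>. X \<omega> * Kf \<omega> \<partial>?P) = 0"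
  proof -
    have "(\<lambda>\<omega>. X \<omega> * Kf \<omega>) = (\<lambda>\<omega>. (K (fst \<omega>) *\<^sub>R H (fst \<omega>)) \<bullet> a (snd \<omega>))"
      by (rule ext) (simp add: X_def Kf_def inner_commute)
    then show ?thesis using pair_inner(2)[OF AB MD KHI aI] a0 by simp
  qed
  have eYK: "(\<integral>\<omega>. Y \<omega> * Kf \<omega> \<partial>?P) = 0"
  proof -
    have ai: "integrable MD (\<lambda>x. a x \<bullet> \<delta>)" using aI by auto
    have "(\<lambda>\<omega>. Y \<omega> * Kf \<omega>) = (\<lambda>\<omega>. K (fst \<omega>) * (a (snd \<omega>) \<bullet> \<delta>))"
      by (rule ext) (simp add: Y_def Kf_def)
    then show ?thesis using pair_mult(2)[OF AB MD KI ai] a0 aI by simp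
  qed
  have eY2: "(\<integral>\<omega>. (Y \<omega>)^2 \<partial>?P) = (\<integral>x. (a x \<bullet> \<delta>)^2 \<partial>MD)"
    unfolding Y_def by (rule pair_snd(2)[OF AB MD ad2])
  have eK2: "(\<integral>\<omega>. (Kf \<omega>)^2 \<partial>?P) = (\<integral>x. (K x)^2 \<partial>AB)"
    unfolding Kf_def by (rule pair_fst(2)[OF AB MD K2])
  have "(\<integral>\<omega>. (W \<omega>)^2 \<partial>?P) = 4 * (\<integral>\<omega>. (X \<omega>)^2 \<partial>?P) + 4 * (\<integral>\<omega>. (Y \<omega>)^2 \<partial>?P) + (\<integral>\<omega>. (Kf \<omega>)^2 \<partial>?P)
      - 8 * (\<integral>\<omega>. X \<omega> * Y \<omega> \<partial>?P) + 4 * (\<integral>\<omega>. X \<omega> * Kf \<omega> \<partial>?P) - 4 * (\<integral>\<omega>. Y \<omega> * Kf \<omega> \<partial>?P)"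
    unfolding Weq
    by (simp add: Bochner_Integration.integral_add Bochner_Integration.integral_diff X2 Y2 K2' XY XK YK
         Bochner_Integration.integrable_add Bochner_Integration.integrable_diff)
  then show "(\<integral>\<omega>. (W \<omega>)^2 \<partial>?P) \<le> 4 * (\<integral>x. (a x \<bullet> \<delta>)^2 \<partial>MD)
        + 4 * (\<integral>x. norm (a x)^2 \<partial>MD) * (\<integral>x. norm (H x)^2 \<partial>AB) + (\<integral>x. (K x)^2 \<partial>AB)"
    using eX2 eXY eXK eYK eY2 eK2 by (simp add: mult.commute)
qed



lemma weighted_sq:
  fixes x y z l1 l2 l3 :: real
  assumes "l1 > 0" "l2 > 0" "l3 > 0"
  shows "(x + y + z)^2 \<le> (l1 + l2 + l3) * (x^2 / l1 + y^2 / l2 + z^2 / l3)"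
proof -
  define p where "p = x / l1"
  define q where "q = y / l2"
  define r where "r = z / l3"
  have x: "x = l1 * p" and y: "y = l2 * q" and z: "z = l3 * r"
    using assms by (auto simp: p_def q_def r_def)
  have "(l1 + l2 + l3) * (x^2 / l1 + y^2 / l2 + z^2 / l3) - (x + y + z)^2
     = l1 * l2 * (p - q)^2 + l1 * l3 * (p - r)^2 + l2 * l3 * (q - r)^2"
    using assms unfolding x y z by (simp add: power2_eq_square field_simps)
  moreover have "0 \<le> l1 * l2 * (p - q)^2 + l1 * l3 * (p - r)^2 + l2 * l3 * (q - r)^2"
    using assms by (intro add_nonneg_nonneg mult_nonneg_nonneg) auto
  ultimately show ?thesis by linarith
qed

lemma coreAB:
  fixes b :: "'p \<Rightarrow> 'c::euclidean_space" and c :: "'q \<Rightarrow> 'c" and \<delta> :: 'c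
  assumes MA: "prob_space MA" and MB: "prob_space MB"
    and [measurable]: "b \<in> borel_measurable MA" "c \<in> borel_measurable MB"
    and b4: "integrable MA (\<lambda>x. norm (b x)^4)" and c4: "integrable MB (\<lambda>x. norm (c x)^4)"
    and b0: "integral\<^sup>L MA b = 0" and c0: "integral\<^sup>L MB c = 0"
    and l: "lT > 0" "lS > 0" "lQ > 0"
  defines "vb \<equiv> \<integral>x. norm (b x)^2 \<partial>MA" and "vc \<equiv> \<integral>x. norm (c x)^2 \<partial>MB"
    and "Mb \<equiv> \<integral>x. norm (b x)^4 \<partial>MA" and "Mc \<equiv> \<integral>x. norm (c x)^4 \<partial>MB"
  defines "H \<equiv> \<lambda>\<omega>. b (fst \<omega>) - c (snd \<omega>)"
    and "K \<equiv> \<lambda>\<omega>. 2 * (\<delta> \<bullet> c (snd \<omega>)) + norm (c (snd \<omega>))^2 - norm (b (fst \<omega>))^2 - (vc - vb)"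
  shows "H \<in> borel_measurable (MA \<Otimes>\<^sub>M MB)" "K \<in> borel_measurable (MA \<Otimes>\<^sub>M MB)"
    "integrable (MA \<Otimes>\<^sub>M MB) (\<lambda>\<omega>. norm (H \<omega>)^2)"
    "(\<integral>\<omega>. norm (H \<omega>)^2 \<partial>(MA \<Otimes>\<^sub>M MB)) = vb + vc"
    "integral\<^sup>L (MA \<Otimes>\<^sub>M MB) H = 0"
    "integrable (MA \<Otimes>\<^sub>M MB) (\<lambda>\<omega>. (K \<omega>)^2)"
    "(\<integral>\<omega>. (K \<omega>)^2 \<partial>(MA \<Otimes>\<^sub>M MB)) \<le> (lT + lS + lQ) * (norm \<delta>^2 * vc / lT + norm \<delta>^2 * vc / lS
        + ((Mb - vb^2) + (Mc - vc^2)) / lQ)"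
proof -
  let ?P = "MA \<Otimes>\<^sub>M MB"
  interpret MA: prob_space MA by fact
  interpret MB: prob_space MB by fact
  interpret P: prob_space ?P by (rule prob_space_pair[OF MA MB])
  note bL = L4_lower[OF MA assms(3) b4] and cL = L4_lower[OF MB assms(4) c4]
  show [measurable]: "H \<in> borel_measurable ?P" "K \<in> borel_measurable ?P"
    unfolding H_def K_def by measurable
  have Heq: "norm (H \<omega>)^2 = norm (b (fst \<omega>))^2 + norm (c (snd \<omega>))^2 - 2 * (b (fst \<omega>) \<bullet> c (snd \<omega>))" for \<omega>
    unfolding H_def by (simp add: power2_norm_eq_inner inner_diff_left inner_diff_right inner_commute)
  have h1: "integrable ?P (\<lambda>\<omega>. norm (b (fst \<omega>))^2)" by (rule pair_fst(1)[OF MA MB bL(2)])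
  have h2: "integrable ?P (\<lambda>\<omega>. norm (c (snd \<omega>))^2)" by (rule pair_snd(1)[OF MA MB cL(2)])
  have h3: "integrable ?P (\<lambda>\<omega>. b (fst \<omega>) \<bullet> c (snd \<omega>))" by (rule pair_inner(1)[OF MA MB bL(1) cL(1)])
  show "integrable ?P (\<lambda>\<omega>. norm (H \<omega>)^2)" unfolding Heq using h1 h2 h3 by auto
  show "(\<integral>\<omega>. norm (H \<omega>)^2 \<partial>?P) = vb + vc"
    unfolding Heq using h1 h2 h3 pair_fst(2)[OF MA MB bL(2)] pair_snd(2)[OF MA MB cL(2)]
      pair_inner(2)[OF MA MB bL(1) cL(1)] b0 c0 by (simp add: vb_def vc_def)
  show "integral\<^sup>L ?P H = 0"
    unfolding H_def using pair_fst[OF MA MB bL(1)] pair_snd[OF MA MB cL(1)] b0 c0 by simp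
  define S where "S = (\<lambda>\<omega>::'p \<times> 'q. \<delta> \<bullet> c (snd \<omega>))"
  define X where "X = (\<lambda>y. norm (c y)^2 - vc)"
  define Y where "Y = (\<lambda>x. norm (b x)^2 - vb)"
  define Q where "Q = (\<lambda>\<omega>::'p \<times> 'q. X (snd \<omega>) - Y (fst \<omega>))"
  have [measurable]: "S \<in> borel_measurable ?P" "Q \<in> borel_measurable ?P" "X \<in> borel_measurable MB" "Y \<in> borel_measurable MA"
    unfolding S_def Q_def X_def Y_def by measurable
  have Keq: "K \<omega> = 2 * S \<omega> + Q \<omega>" for \<omega> unfolding K_def S_def Q_def X_def Y_def by simp
  have b4': "integrable MA (\<lambda>x. (norm (b x)^2)^2)" using b4 by simp
  have c4': "integrable MB (\<lambda>x. (norm (c x)^2)^2)" using c4 by simp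
  have X2: "integrable MB (\<lambda>y. (X y)^2)"
    unfolding X_def by (rule sqi_add[where g="\<lambda>_. - vc", simplified]) (use c4' in auto)
  have Y2: "integrable MA (\<lambda>y. (Y y)^2)"
    unfolding Y_def by (rule sqi_add[where g="\<lambda>_. - vb", simplified]) (use b4' in auto)
  have XI: "integrable MB X" unfolding X_def using cL(2) by auto
  have YI: "integrable MA Y" unfolding Y_def using bL(2) by auto
  have EX: "integral\<^sup>L MB X = 0" unfolding X_def using cL(2) by (simp add: vc_def MB.prob_space)
  have EY: "integral\<^sup>L MA Y = 0" unfolding Y_def using bL(2) by (simp add: vb_def MA.prob_space)
  have EX2: "(\<integral>y. (X y)^2 \<partial>MB) = Mc - vc^2"
  proof -
    have "(\<lambda>y. (X y)^2) = (\<lambda>y. norm (c y)^4 - 2 * vc * norm (c y)^2 + vc^2)"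
      unfolding X_def by (rule ext) (simp add: power2_eq_square power4_eq_xxxx algebra_simps)
    then show ?thesis using c4 cL(2) by (simp add: Mc_def vc_def power2_eq_square MB.prob_space)
  qed
  have EY2: "(\<integral>y. (Y y)^2 \<partial>MA) = Mb - vb^2"
  proof -
    have "(\<lambda>y. (Y y)^2) = (\<lambda>y. norm (b y)^4 - 2 * vb * norm (b y)^2 + vb^2)"
      unfolding Y_def by (rule ext) (simp add: power2_eq_square power4_eq_xxxx algebra_simps)
    then show ?thesis using b4 bL(2) by (simp add: Mb_def vb_def power2_eq_square MA.prob_space)
  qed
  have dc2: "integrable MB (\<lambda>y. (\<delta> \<bullet> c y)^2)"
  proof (rule Bochner_Integration.integrable_bound)
    show "integrable MB (\<lambda>x. norm \<delta> ^ 2 * norm (c x)^2)" using cL(2) by auto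
    show "AE x in MB. norm ((\<delta> \<bullet> c x)^2) \<le> norm (norm \<delta> ^ 2 * norm (c x)^2)"
    proof (rule AE_I2)
      fix x show "norm ((\<delta> \<bullet> c x)^2) \<le> norm (norm \<delta> ^ 2 * norm (c x)^2)"
        using inner_sq_le[of \<delta> "c x"] by simp
    qed
  qed measurable
  have S2: "integrable ?P (\<lambda>\<omega>. (S \<omega>)^2)" unfolding S_def by (rule pair_snd(1)[OF MA MB dc2])
  have ES2: "(\<integral>\<omega>. (S \<omega>)^2 \<partial>?P) \<le> norm \<delta>^2 * vc"
  proof -
    have "(\<integral>\<omega>. (S \<omega>)^2 \<partial>?P) = (\<integral>y. (\<delta> \<bullet> c y)^2 \<partial>MB)"
      unfolding S_def by (rule pair_snd(2)[OF MA MB dc2])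
    also have "\<dots> \<le> (\<integral>y. norm \<delta>^2 * norm (c y)^2 \<partial>MB)"
      by (rule integral_mono[OF dc2]) (use cL(2) inner_sq_le in auto)
    also have "\<dots> = norm \<delta>^2 * vc" by (simp add: vc_def)
    finally show ?thesis .
  qed
  have Xs: "integrable ?P (\<lambda>\<omega>. (X (snd \<omega>))^2)" by (rule pair_snd(1)[OF MA MB X2])
  have Ys: "integrable ?P (\<lambda>\<omega>. (Y (fst \<omega>))^2)" by (rule pair_fst(1)[OF MA MB Y2])
  have XY: "integrable ?P (\<lambda>\<omega>. Y (fst \<omega>) * X (snd \<omega>))" by (rule pair_mult(1)[OF MA MB YI XI])
  have Qeq: "(Q \<omega>)^2 = (X (snd \<omega>))^2 + (Y (fst \<omega>))^2 - 2 * (Y (fst \<omega>) * X (snd \<omega>))" for \<omega>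
    unfolding Q_def by (simp add: power2_eq_square algebra_simps)
  have Q2: "integrable ?P (\<lambda>\<omega>. (Q \<omega>)^2)" unfolding Qeq using Xs Ys XY by auto
  have EQ2: "(\<integral>\<omega>. (Q \<omega>)^2 \<partial>?P) = (Mb - vb^2) + (Mc - vc^2)"
    unfolding Qeq using Xs Ys XY pair_snd(2)[OF MA MB X2] pair_fst(2)[OF MA MB Y2]
      pair_mult(2)[OF MA MB YI XI] EX EY EX2 EY2 by simp
  have S2': "integrable ?P (\<lambda>\<omega>. (2 * S \<omega>)^2)" using S2 by (simp add: power_mult_distrib)
  show "integrable ?P (\<lambda>\<omega>. (K \<omega>)^2)" unfolding Keq by (rule sqi_add[OF _ _ S2' Q2]) measurable
  let ?k = "lT + lS + lQ"
  have "(\<integral>\<omega>. (K \<omega>)^2 \<partial>?P) \<le> (\<integral>\<omega>. ?k * ((S \<omega>)^2 / lT + (S \<omega>)^2 / lS + (Q \<omega>)^2 / lQ) \<partial>?P)"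
  proof (rule integral_mono)
    show "integrable ?P (\<lambda>\<omega>. (K \<omega>)^2)" unfolding Keq by (rule sqi_add[OF _ _ S2' Q2]) measurable
    show "integrable ?P (\<lambda>\<omega>. ?k * ((S \<omega>)^2 / lT + (S \<omega>)^2 / lS + (Q \<omega>)^2 / lQ))"
      using S2 Q2 by auto
    fix \<omega> show "(K \<omega>)^2 \<le> ?k * ((S \<omega>)^2 / lT + (S \<omega>)^2 / lS + (Q \<omega>)^2 / lQ)"
      unfolding Keq using weighted_sq[OF l, of "S \<omega>" "S \<omega>" "Q \<omega>"] by simp
  qed
  also have "\<dots> = ?k * ((\<integral>\<omega>. (S \<omega>)^2 \<partial>?P) / lT + (\<integral>\<omega>. (S \<omega>)^2 \<partial>?P) / lS + (\<integral>\<omega>. (Q \<omega>)^2 \<partial>?P) / lQ)"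
    using S2 Q2 by simp
  also have "\<dots> \<le> ?k * (norm \<delta>^2 * vc / lT + norm \<delta>^2 * vc / lS + ((Mb - vb^2) + (Mc - vc^2)) / lQ)"
    unfolding EQ2 using ES2 l by (intro mult_left_mono add_mono divide_right_mono) auto
  finally show "(\<integral>\<omega>. (K \<omega>)^2 \<partial>?P) \<le> ?k * (norm \<delta>^2 * vc / lT + norm \<delta>^2 * vc / lS
        + ((Mb - vb^2) + (Mc - vc^2)) / lQ)" .
qed



lemma trcov_eq:
  fixes f :: "'x \<Rightarrow> 'a::euclidean_space"
  assumes D: "prob_space D" and [measurable]: "f \<in> borel_measurable D"
    and f2: "integrable D (\<lambda>x. norm (f x - feat_mean D f)^2)"
  shows "feat_trcov D f = (\<integral>x. norm (f x - feat_mean D f)^2 \<partial>D)"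
proof -
  define g where "g = (\<lambda>x. f x - feat_mean D f)"
  have [measurable]: "g \<in> borel_measurable D" unfolding g_def by measurable
  have g2: "integrable D (\<lambda>x. norm (g x)^2)" using f2 unfolding g_def .
  have ib: "integrable D (\<lambda>x. (g x \<bullet> b) * (g x \<bullet> b))" for b :: 'a
  proof (rule Bochner_Integration.integrable_bound)
    show "integrable D (\<lambda>x. norm b ^ 2 * norm (g x)^2)" using g2 by auto
    show "AE x in D. norm ((g x \<bullet> b) * (g x \<bullet> b)) \<le> norm (norm b ^ 2 * norm (g x)^2)"
    proof (rule AE_I2)
      fix x show "norm ((g x \<bullet> b) * (g x \<bullet> b)) \<le> norm (norm b ^ 2 * norm (g x)^2)"
        using inner_sq_le[of "g x" b] by (simp add: power2_eq_square mult.commute)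
    qed
  qed measurable
  have eq: "norm (g x)^2 = (\<Sum>b\<in>Basis. (g x \<bullet> b) * (g x \<bullet> b))" for x
    unfolding power2_norm_eq_inner by (rule euclidean_inner)
  have "(\<integral>x. norm (g x)^2 \<partial>D) = (\<Sum>b\<in>Basis. (\<integral>x. (g x \<bullet> b) * (g x \<bullet> b) \<partial>D))"
    unfolding eq by (rule Bochner_Integration.integral_sum) (use ib in auto)
  then show ?thesis unfolding feat_trcov_def feat_cov_def g_def by simp
qed

lemma emp_centered:
  fixes f :: "'x \<Rightarrow> 'a::euclidean_space"
  assumes "m \<ge> 1"
  shows "emp_mean m f xs - \<mu> = (1 / real m) *\<^sub>R (\<Sum>s<m. (f (xs s) - \<mu>))"
proof -
  have "(\<Sum>s<m. (f (xs s) - \<mu>)) = (\<Sum>s<m. f (xs s)) - real m *\<^sub>R \<mu>"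
    by (simp add: sum_subtractf sum_constant_scaleR)
  then show ?thesis using assms by (simp add: emp_mean_def scaleR_diff_right)
qed

lemma le_kx: "0 \<le> (x::real) \<Longrightarrow> 1 \<le> k \<Longrightarrow> x \<le> k * x"
  using mult_right_mono[of 1 k x] by simp

lemma margin_alg:
  fixes a b c \<delta> :: "'a::real_inner"
  shows "norm (a - c - \<delta>)^2 - norm (a - b)^2
     = norm \<delta>^2 + (2 * (a \<bullet> (b - c - \<delta>)) + 2 * (\<delta> \<bullet> c) + norm c^2 - norm b^2)"
  by (simp add: power2_norm_eq_inner inner_diff_left inner_diff_right inner_commute algebra_simps)

theorem mainTheorem3:
  fixes Di Dj :: "'x measure" and f :: "'x \<Rightarrow> 'a::euclidean_space"
    and m :: nat and lamT lamS lamQ :: real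
  assumes "prob_space Di" and "prob_space Dj"
    and "f \<in> borel_measurable Di" and "f \<in> borel_measurable Dj"
    and "integrable Di f" and "integrable Dj f"
    and "integrable Di (\<lambda>x. norm (f x - feat_mean Di f) ^ 4)"
    and "integrable Dj (\<lambda>x. norm (f x - feat_mean Dj f) ^ 4)"
    and "m \<ge> 1"
    and "norm (feat_mean Dj f - feat_mean Di f) > 0"
    and "norm (feat_mean Dj f - feat_mean Di f) ^ 2
           + (feat_trcov Dj f - feat_trcov Di f) / real m > 0"
    and "lamT > 0" and "lamS > 0" and "lamQ > 0"
  shows
    "let d = norm (feat_mean Dj f - feat_mean Di f);
         u = (1 / d) *\<^sub>R (feat_mean Dj f - feat_mean Di f);
         vi = feat_trcov Di f; vj = feat_trcov Dj f;
         Vt = feat_cov Di f u u / d ^ 2;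
         V = (vi + vj) / d ^ 2;
         Th = (feat_M4 Di f + feat_M4 Dj f) / d ^ 4;
         kap = lamT + lamS + lamQ;
         aT = 4 * kap / (real m * lamT);
         aS = kap / (real m * lamS);
         aQ = kap / (real m ^ 3 * lamQ);
         P = episode_space m Di Dj
     in measure P {\<omega> \<in> space P. margin m f \<omega> \<le> 0}
        \<le> (4 * Vt + aT * V ^ 2 + (aT / 4 + aS) * V
            + aQ * (Th + 2 * (real m - 1) * V ^ 2))
          / (1 + (vj - vi) / (real m * d ^ 2)) ^ 2"
proof -
  note Di = assms(1) and Dj = assms(2)
  interpret Di: prob_space Di by fact
  interpret Dj: prob_space Dj by fact
  have [measurable]: "f \<in> borel_measurable Di" "f \<in> borel_measurable Dj" using assms(3,4) .
  define \<mu>i where "\<mu>i = feat_mean Di f"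
  define \<mu>j where "\<mu>j = feat_mean Dj f"
  define \<delta> where "\<delta> = \<mu>j - \<mu>i"
  define d where "d = norm \<delta>"
  define u where "u = (1 / d) *\<^sub>R \<delta>"
  define vi where "vi = feat_trcov Di f"
  define vj where "vj = feat_trcov Dj f"
  define M4i where "M4i = feat_M4 Di f"
  define M4j where "M4j = feat_M4 Dj f"
  define kap where "kap = lamT + lamS + lamQ"
  define aT where "aT = 4 * kap / (real m * lamT)"
  define aS where "aS = kap / (real m * lamS)"
  define aQ where "aQ = kap / (real m ^ 3 * lamQ)"
  define P where "P = episode_space m Di Dj"
  define gi where "gi = (\<lambda>x. f x - \<mu>i)"
  define gj where "gj = (\<lambda>x. f x - \<mu>j)"
  have d0: "d > 0" using assms(10) by (simp add: d_def \<delta>_def \<mu>i_def \<mu>j_def)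
  have m1: "real m \<ge> 1" using assms(9) by simp
  have [measurable]: "gi \<in> borel_measurable Di" "gj \<in> borel_measurable Dj" unfolding gi_def gj_def by measurable
  have gi4: "integrable Di (\<lambda>x. norm (gi x)^4)" using assms(7) by (simp add: gi_def \<mu>i_def)
  have gj4: "integrable Dj (\<lambda>x. norm (gj x)^4)" using assms(8) by (simp add: gj_def \<mu>j_def)
  have gi0: "integral\<^sup>L Di gi = 0" using assms(5) by (simp add: gi_def \<mu>i_def feat_mean_def Di.prob_space)
  have gj0: "integral\<^sup>L Dj gj = 0" using assms(6) by (simp add: gj_def \<mu>j_def feat_mean_def Dj.prob_space)
  note giL = L4_lower[OF Di \<open>gi \<in> borel_measurable Di\<close> gi4] and gjL = L4_lower[OF Dj \<open>gj \<in> borel_measurable Dj\<close> gj4]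
  have vi_eq: "vi = (\<integral>x. norm (gi x)^2 \<partial>Di)"
    unfolding vi_def using trcov_eq[OF Di assms(3)] giL(2) by (simp add: gi_def \<mu>i_def)
  have vj_eq: "vj = (\<integral>x. norm (gj x)^2 \<partial>Dj)"
    unfolding vj_def using trcov_eq[OF Dj assms(4)] gjL(2) by (simp add: gj_def \<mu>j_def)
  have M4i_eq: "M4i = (\<integral>x. norm (gi x)^4 \<partial>Di)" by (simp add: M4i_def feat_M4_def gi_def \<mu>i_def)
  have M4j_eq: "M4j = (\<integral>x. norm (gj x)^4 \<partial>Dj)" by (simp add: M4j_def feat_M4_def gj_def \<mu>j_def)
  have vi0: "vi \<ge> 0" unfolding vi_eq by simp
  have vj0: "vj \<ge> 0" unfolding vj_eq by simp
  have gim: "gi \<in> borel_measurable Di" and gjm: "gj \<in> borel_measurable Dj" by measurable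
  define A where "A = PiM {..<m} (\<lambda>_. Di)"
  define B where "B = PiM {..<m} (\<lambda>_. Dj)"
  have A: "prob_space A" unfolding A_def by (rule prob_space_PiM) (use Di in auto)
  have B: "prob_space B" unfolding B_def by (rule prob_space_PiM) (use Dj in auto)
  define Si where "Si = (\<lambda>xs. \<Sum>s<m. gi (xs s))"
  define Sj where "Sj = (\<lambda>xs. \<Sum>s<m. gj (xs s))"
  have Sim[measurable]: "Si \<in> borel_measurable A" unfolding Si_def A_def by (rule Ssum_meas[OF gim])
  have Sjm[measurable]: "Sj \<in> borel_measurable B" unfolding Sj_def B_def by (rule Ssum_meas[OF gjm])
  have pmi: "integrable A (\<lambda>xs. norm (Si xs)^4)" "integral\<^sup>L A Si = 0"
     "(\<integral>xs. norm (Si xs)^2 \<partial>A) = real m * vi"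
     "(\<integral>xs. norm (Si xs)^4 \<partial>A) \<le> real m * M4i + 3 * real m * (real m - 1) * vi^2"
    using pim_moments[OF Di gim gi4 gi0, of m] unfolding A_def Si_def vi_eq M4i_eq by auto
  have pmj: "integrable B (\<lambda>xs. norm (Sj xs)^4)" "integral\<^sup>L B Sj = 0"
     "(\<integral>xs. norm (Sj xs)^2 \<partial>B) = real m * vj"
     "(\<integral>xs. norm (Sj xs)^4 \<partial>B) \<le> real m * M4j + 3 * real m * (real m - 1) * vj^2"
    using pim_moments[OF Dj gjm gj4 gj0, of m] unfolding B_def Sj_def vj_eq M4j_eq by auto
  have SiL: "integrable A Si" "integrable A (\<lambda>x. norm (Si x)^2)" using L4_lower[OF A Sim pmi(1)] by auto
  have SjL: "integrable B Sj" "integrable B (\<lambda>x. norm (Sj x)^2)" using L4_lower[OF B Sjm pmj(1)] by auto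
  define b where "b = (\<lambda>xs. (1 / real m) *\<^sub>R Si xs)"
  define c where "c = (\<lambda>xs. (1 / real m) *\<^sub>R Sj xs)"
  have bm[measurable]: "b \<in> borel_measurable A" unfolding b_def by measurable
  have cm[measurable]: "c \<in> borel_measurable B" unfolding c_def by measurable
  have nb: "norm (b xs)^k = (1 / real m)^k * norm (Si xs)^k" for xs k
    unfolding b_def using m1 by (simp add: power_mult_distrib power_divide)
  have nc: "norm (c xs)^k = (1 / real m)^k * norm (Sj xs)^k" for xs k
    unfolding c_def using m1 by (simp add: power_mult_distrib power_divide)
  have b4: "integrable A (\<lambda>x. norm (b x)^4)" unfolding nb using pmi(1) by simp
  have c4: "integrable B (\<lambda>x. norm (c x)^4)" unfolding nc using pmj(1) by simp
  have b0: "integral\<^sup>L A b = 0" unfolding b_def using pmi(2) by simp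
  have c0: "integral\<^sup>L B c = 0" unfolding c_def using pmj(2) by simp
  have b2: "(\<integral>x. norm (b x)^2 \<partial>A) = vi / real m"
    unfolding nb using pmi(3) m1 by (simp add: power2_eq_square)
  have c2: "(\<integral>x. norm (c x)^2 \<partial>B) = vj / real m"
    unfolding nc using pmj(3) m1 by (simp add: power2_eq_square)
  have b4le: "(\<integral>x. norm (b x)^4 \<partial>A) \<le> (M4i + 3 * (real m - 1) * vi^2) / real m ^ 3"
  proof -
    have "(\<integral>x. norm (b x)^4 \<partial>A) = (1 / real m)^4 * (\<integral>x. norm (Si x)^4 \<partial>A)" unfolding nb by simp
    also have "\<dots> \<le> (1 / real m)^4 * (real m * M4i + 3 * real m * (real m - 1) * vi^2)"
      by (rule mult_left_mono[OF pmi(4)]) simp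
    also have "\<dots> = (M4i + 3 * (real m - 1) * vi^2) / real m ^ 3"
      using m1 by (simp add: field_simps power4_eq_xxxx power3_eq_cube)
    finally show ?thesis .
  qed
  have c4le: "(\<integral>x. norm (c x)^4 \<partial>B) \<le> (M4j + 3 * (real m - 1) * vj^2) / real m ^ 3"
  proof -
    have "(\<integral>x. norm (c x)^4 \<partial>B) = (1 / real m)^4 * (\<integral>x. norm (Sj x)^4 \<partial>B)" unfolding nc by simp
    also have "\<dots> \<le> (1 / real m)^4 * (real m * M4j + 3 * real m * (real m - 1) * vj^2)"
      by (rule mult_left_mono[OF pmj(4)]) simp
    also have "\<dots> = (M4j + 3 * (real m - 1) * vj^2) / real m ^ 3"
      using m1 by (simp add: field_simps power4_eq_xxxx power3_eq_cube)
    finally show ?thesis .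
  qed
  define H where "H = (\<lambda>\<omega>::(nat \<Rightarrow> 'x) \<times> (nat \<Rightarrow> 'x). b (fst \<omega>) - c (snd \<omega>))"
  define K where "K = (\<lambda>\<omega>::(nat \<Rightarrow> 'x) \<times> (nat \<Rightarrow> 'x). 2 * (\<delta> \<bullet> c (snd \<omega>)) + norm (c (snd \<omega>))^2 - norm (b (fst \<omega>))^2 - (vj / real m - vi / real m))"
  define Mb where "Mb = (\<integral>x. norm (b x)^4 \<partial>A)"
  define Mc where "Mc = (\<integral>x. norm (c x)^4 \<partial>B)"
  note cAB = coreAB[OF A B bm cm b4 c4 b0 c0 assms(12) assms(13) assms(14)]
  have Hm[measurable]: "H \<in> borel_measurable (A \<Otimes>\<^sub>M B)" and Km[measurable]: "K \<in> borel_measurable (A \<Otimes>\<^sub>M B)"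
    and H2: "integrable (A \<Otimes>\<^sub>M B) (\<lambda>\<omega>. norm (H \<omega>)^2)"
    and H2e: "(\<integral>\<omega>. norm (H \<omega>)^2 \<partial>(A \<Otimes>\<^sub>M B)) = vi / real m + vj / real m"
    and H0: "integral\<^sup>L (A \<Otimes>\<^sub>M B) H = 0"
    and K2: "integrable (A \<Otimes>\<^sub>M B) (\<lambda>\<omega>. (K \<omega>)^2)"
    and K2e: "(\<integral>\<omega>. (K \<omega>)^2 \<partial>(A \<Otimes>\<^sub>M B)) \<le> kap * (norm \<delta>^2 * (vj / real m) / lamT + norm \<delta>^2 * (vj / real m) / lamS
        + ((Mb - (vi / real m)^2) + (Mc - (vj / real m)^2)) / lamQ)"
    using cAB unfolding b2 c2 H_def[symmetric] K_def[symmetric] kap_def[symmetric] Mb_def[symmetric] Mc_def[symmetric]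
    by (simp_all add: H_def K_def)
  define W where "W = (\<lambda>\<omega>. 2 * (gi (snd \<omega>) \<bullet> (H (fst \<omega>) - \<delta>)) + K (fst \<omega>))"
  note cP = coreP[where \<delta>=\<delta>, OF prob_space_pair[OF A B] Di gim Hm Km giL(2) gi0 H2 H0 K2]
  have P_eq: "P = (A \<Otimes>\<^sub>M B) \<Otimes>\<^sub>M Di" unfolding P_def episode_space_def A_def B_def ..
  have Wm[measurable]: "W \<in> borel_measurable P" unfolding P_eq W_def by measurable
  have W2: "integrable P (\<lambda>\<omega>. (W \<omega>)^2)" unfolding P_eq W_def by (rule cP(1))
  have W2e: "(\<integral>\<omega>. (W \<omega>)^2 \<partial>P) \<le> 4 * (\<integral>x. (gi x \<bullet> \<delta>)^2 \<partial>Di) + 4 * vi * (vi / real m + vj / real m)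
       + kap * (norm \<delta>^2 * (vj / real m) / lamT + norm \<delta>^2 * (vj / real m) / lamS
        + ((Mb - (vi / real m)^2) + (Mc - (vj / real m)^2)) / lamQ)"
  proof -
    have "(\<integral>\<omega>. (W \<omega>)^2 \<partial>P) \<le> 4 * (\<integral>x. (gi x \<bullet> \<delta>)^2 \<partial>Di) + 4 * vi * (vi / real m + vj / real m)
       + (\<integral>\<omega>. (K \<omega>)^2 \<partial>(A \<Otimes>\<^sub>M B))"
      using cP(2) unfolding H2e vi_eq[symmetric] P_eq W_def .
    then show ?thesis using K2e by linarith
  qed
  define e where "e = d^2 + (vj - vi) / real m"
  have e0: "e > 0" using assms(11) unfolding e_def d_def \<delta>_def vi_def vj_def \<mu>i_def \<mu>j_def by simp
  have emp_i: "emp_mean m f xs = \<mu>i + b xs" for xs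
    using emp_centered[OF assms(9), of f xs \<mu>i] unfolding b_def Si_def gi_def by (simp add: algebra_simps)
  have emp_j: "emp_mean m f xs = \<mu>j + c xs" for xs
    using emp_centered[OF assms(9), of f xs \<mu>j] unfolding c_def Sj_def gj_def by (simp add: algebra_simps)
  have marg: "margin m f \<omega> = e + W \<omega>" for \<omega>
  proof -
    obtain xs ys x where \<omega>: "\<omega> = ((xs, ys), x)" by (metis prod.collapse)
    have 1: "f x - emp_mean m f ys = gi x - c ys - \<delta>" unfolding emp_j gi_def \<delta>_def by (simp add: algebra_simps)
    have 2: "f x - emp_mean m f xs = gi x - b xs" unfolding emp_i gi_def by (simp add: algebra_simps)
    have "margin m f \<omega> = norm (gi x - c ys - \<delta>)^2 - norm (gi x - b xs)^2"
      unfolding \<omega> margin_def using 1 2 by simp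
    also have "\<dots> = d^2 + (2 * (gi x \<bullet> (b xs - c ys - \<delta>)) + 2 * (\<delta> \<bullet> c ys) + norm (c ys)^2 - norm (b xs)^2)"
      unfolding d_def by (rule margin_alg)
    also have "\<dots> = e + W \<omega>"
      unfolding e_def W_def H_def K_def \<omega> by (simp add: diff_divide_distrib algebra_simps)
    finally show ?thesis .
  qed
  have meas1: "measure P {\<omega> \<in> space P. margin m f \<omega> \<le> 0} \<le> measure P {\<omega> \<in> space P. e^2 \<le> (W \<omega>)^2}"
  proof (rule finite_measure.finite_measure_mono)
    show "finite_measure P" unfolding P_eq using prob_space_pair[OF prob_space_pair[OF A B] Di]
      by (simp add: prob_space_def)
    show "{\<omega> \<in> space P. e^2 \<le> (W \<omega>)^2} \<in> sets P" by measurable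
    show "{\<omega> \<in> space P. margin m f \<omega> \<le> 0} \<subseteq> {\<omega> \<in> space P. e^2 \<le> (W \<omega>)^2}"
    proof safe
      fix \<omega> assume "margin m f \<omega> \<le> 0"
      then have "e \<le> - W \<omega>" using marg[of \<omega>] by simp
      then have "e^2 \<le> (- W \<omega>)^2" using e0 by (intro power_mono) auto
      then show "e^2 \<le> (W \<omega>)^2" by simp
    qed
  qed
  have meas2: "measure P {\<omega> \<in> space P. e^2 \<le> (W \<omega>)^2} \<le> (\<integral>\<omega>. (W \<omega>)^2 \<partial>P) / e^2"
    by (rule integral_Markov_inequality_measure[OF W2, of "space P"]) (use e0 in auto)
  define C where "C = feat_cov Di f u u"
  have mpos: "real m > 0" using m1 by simp
  have \<delta>u: "\<delta> = d *\<^sub>R u" unfolding u_def using d0 by simp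
  have q_eq: "(\<integral>x. (gi x \<bullet> \<delta>)^2 \<partial>Di) = d^2 * C"
  proof -
    have "(\<lambda>x. (gi x \<bullet> \<delta>)^2) = (\<lambda>x. d^2 * ((gi x \<bullet> u) * (gi x \<bullet> u)))"
      by (rule ext) (simp add: \<delta>u power2_eq_square)
    then show ?thesis unfolding C_def feat_cov_def gi_def \<mu>i_def by simp
  qed
  have kT: "kap / lamT \<ge> 1" and kS: "kap / lamS \<ge> 1" and kQ: "kap / lamQ \<ge> 1"
    using assms(12-14) by (simp_all add: kap_def field_simps)
  have Mb_le: "Mb - (vi / real m)^2 \<le> (M4i + 2 * (real m - 1) * vi^2) / real m ^ 3"
  proof -
    have "Mb - (vi / real m)^2 \<le> (M4i + 3 * (real m - 1) * vi^2) / real m ^ 3 - real m * vi^2 / real m ^ 3"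
    proof -
      have t: "(vi / real m)^2 = real m * vi^2 / real m ^ 3" using mpos by (simp add: power2_eq_square power3_eq_cube field_simps)
      show ?thesis unfolding Mb_def t by (rule diff_right_mono[OF b4le])
    qed
    also have "\<dots> = (M4i + (2 * real m - 3) * vi^2) / real m ^ 3"
      unfolding diff_divide_distrib[symmetric] by (simp add: algebra_simps)
    also have "\<dots> \<le> (M4i + 2 * (real m - 1) * vi^2) / real m ^ 3"
      using mpos by (intro divide_right_mono) (auto intro!: mult_right_mono)
    finally show ?thesis .
  qed
  have Mc_le: "Mc - (vj / real m)^2 \<le> (M4j + 2 * (real m - 1) * vj^2) / real m ^ 3"
  proof -
    have "Mc - (vj / real m)^2 \<le> (M4j + 3 * (real m - 1) * vj^2) / real m ^ 3 - real m * vj^2 / real m ^ 3"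
    proof -
      have t: "(vj / real m)^2 = real m * vj^2 / real m ^ 3" using mpos by (simp add: power2_eq_square power3_eq_cube field_simps)
      show ?thesis unfolding Mc_def t by (rule diff_right_mono[OF c4le])
    qed
    also have "\<dots> = (M4j + (2 * real m - 3) * vj^2) / real m ^ 3"
      unfolding diff_divide_distrib[symmetric] by (simp add: algebra_simps)
    also have "\<dots> \<le> (M4j + 2 * (real m - 1) * vj^2) / real m ^ 3"
      using mpos by (intro divide_right_mono) (auto intro!: mult_right_mono)
    finally show ?thesis .
  qed
  have T1: "4 * vi * (vi / real m + vj / real m) \<le> aT * (vi + vj)^2"
  proof -
    have "4 * vi * (vi / real m + vj / real m) = 4 * (vi * (vi + vj)) / real m" using mpos by (simp add: field_simps)
    also have "\<dots> \<le> 4 * ((kap / lamT) * (vi + vj)^2) / real m"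
    proof -
      have "vi * (vi + vj) \<le> (vi + vj) * (vi + vj)" using vi0 vj0 by (intro mult_right_mono) auto
      also have "\<dots> \<le> (kap / lamT) * ((vi + vj) * (vi + vj))" using kT vi0 vj0 by (intro le_kx) auto
      finally show ?thesis using mpos by (intro divide_right_mono) (auto simp: power2_eq_square)
    qed
    also have "\<dots> = aT * (vi + vj)^2" unfolding aT_def using assms(12) mpos by (simp add: field_simps)
    finally show ?thesis .
  qed
  have T2: "kap * (d^2 * (vj / real m) / lamT) \<le> (aT / 4) * (vi + vj) * d^2"
  proof -
    have "kap * (d^2 * (vj / real m) / lamT) = (kap / (real m * lamT)) * (vj * d^2)"
      using mpos assms(12) by (simp add: field_simps)
    also have "\<dots> \<le> (kap / (real m * lamT)) * ((vi + vj) * d^2)"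
      using vi0 assms(12-14) mpos by (intro mult_left_mono mult_right_mono) (auto simp: kap_def)
    also have "\<dots> = (aT / 4) * (vi + vj) * d^2" unfolding aT_def by simp
    finally show ?thesis .
  qed
  have T2': "kap * (d^2 * (vj / real m) / lamS) \<le> aS * (vi + vj) * d^2"
  proof -
    have "kap * (d^2 * (vj / real m) / lamS) = (kap / (real m * lamS)) * (vj * d^2)"
      using mpos assms(13) by (simp add: field_simps)
    also have "\<dots> \<le> (kap / (real m * lamS)) * ((vi + vj) * d^2)"
      using vi0 assms(12-14) mpos by (intro mult_left_mono mult_right_mono) (auto simp: kap_def)
    also have "\<dots> = aS * (vi + vj) * d^2" unfolding aS_def by simp
    finally show ?thesis .
  qed
  have T3: "kap * (((Mb - (vi / real m)^2) + (Mc - (vj / real m)^2)) / lamQ)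
      \<le> aQ * (M4i + M4j + 2 * (real m - 1) * (vi + vj)^2)"
  proof -
    have k0: "kap / lamQ \<ge> 0" using kQ by simp
    have "kap * (((Mb - (vi / real m)^2) + (Mc - (vj / real m)^2)) / lamQ)
        = (kap / lamQ) * ((Mb - (vi / real m)^2) + (Mc - (vj / real m)^2))" by simp
    also have "\<dots> \<le> (kap / lamQ) * ((M4i + 2 * (real m - 1) * vi^2) / real m ^ 3 + (M4j + 2 * (real m - 1) * vj^2) / real m ^ 3)"
      by (intro mult_left_mono[OF _ k0] add_mono Mb_le Mc_le)
    also have "\<dots> = (kap / lamQ) * ((M4i + M4j + 2 * (real m - 1) * (vi^2 + vj^2)) / real m ^ 3)"
      by (simp add: add_divide_distrib[symmetric] algebra_simps)
    also have "\<dots> \<le> (kap / lamQ) * ((M4i + M4j + 2 * (real m - 1) * (vi + vj)^2) / real m ^ 3)"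
    proof -
      have "vi^2 + vj^2 \<le> (vi + vj)^2" using vi0 vj0 by (simp add: power2_eq_square algebra_simps)
      then have "2 * (real m - 1) * (vi^2 + vj^2) \<le> 2 * (real m - 1) * (vi + vj)^2"
        using m1 by (intro mult_left_mono) auto
      then show ?thesis using k0 mpos by (intro mult_left_mono divide_right_mono) auto
    qed
    also have "\<dots> = aQ * (M4i + M4j + 2 * (real m - 1) * (vi + vj)^2)"
      unfolding aQ_def by simp
    finally show ?thesis .
  qed
  define Nd4 where "Nd4 = 4 * (d^2 * C) + aT * (vi + vj)^2 + (aT / 4 + aS) * (vi + vj) * d^2
     + aQ * (M4i + M4j + 2 * (real m - 1) * (vi + vj)^2)"
  have WN: "(\<integral>\<omega>. (W \<omega>)^2 \<partial>P) \<le> Nd4"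
  proof -
    have "kap * (d\<^sup>2 * (vj / real m) / lamT + d\<^sup>2 * (vj / real m) / lamS + (Mb - (vi / real m)\<^sup>2 + (Mc - (vj / real m)\<^sup>2)) / lamQ)
      = kap * (d\<^sup>2 * (vj / real m) / lamT) + kap * (d\<^sup>2 * (vj / real m) / lamS) + kap * ((Mb - (vi / real m)\<^sup>2 + (Mc - (vj / real m)\<^sup>2)) / lamQ)"
      by (simp add: distrib_left)
    then show ?thesis using W2e T1 T2 T2' T3 q_eq unfolding Nd4_def d_def[symmetric]
      by (simp add: distrib_right)
  qed
  have Deq: "1 + (vj - vi) / (real m * d^2) = e / d^2"
    unfolding e_def using d0 mpos by (simp add: field_simps)
  have Neq: "4 * (C / d^2) + aT * ((vi + vj) / d^2)^2 + (aT / 4 + aS) * ((vi + vj) / d^2)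
      + aQ * ((M4i + M4j) / d^4 + 2 * (real m - 1) * ((vi + vj) / d^2)^2) = Nd4 / d^4"
    unfolding Nd4_def using d0 by (simp add: field_simps power2_eq_square power4_eq_xxxx)
  have final: "measure P {\<omega> \<in> space P. margin m f \<omega> \<le> 0} \<le>
      (4 * (C / d^2) + aT * ((vi + vj) / d^2)^2 + (aT / 4 + aS) * ((vi + vj) / d^2)
      + aQ * ((M4i + M4j) / d^4 + 2 * (real m - 1) * ((vi + vj) / d^2)^2)) / (1 + (vj - vi) / (real m * d^2))^2"
  proof -
    have "measure P {\<omega> \<in> space P. margin m f \<omega> \<le> 0} \<le> (\<integral>\<omega>. (W \<omega>)^2 \<partial>P) / e^2"
      using meas1 meas2 by linarith
    also have "\<dots> \<le> Nd4 / e^2" using WN e0 by (intro divide_right_mono) auto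
    also have "\<dots> = (Nd4 / d^4) / (e / d^2)^2" using d0 by (simp add: power_divide field_simps power4_eq_xxxx power2_eq_square)
    finally show ?thesis unfolding Neq Deq .
  qed
  show ?thesis
    unfolding Let_def \<mu>i_def[symmetric] \<mu>j_def[symmetric] \<delta>_def[symmetric] d_def[symmetric] u_def[symmetric]
      vi_def[symmetric] vj_def[symmetric] C_def[symmetric] M4i_def[symmetric] M4j_def[symmetric]
      kap_def[symmetric] aT_def[symmetric] aS_def[symmetric] aQ_def[symmetric] P_def[symmetric]
    using final by (simp add: add_divide_distrib)
qed


end
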